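(* Let $\mathcal{A}=\mathbb{C}\setminus(-\infty,0]$ and let $H$ be the principal branch on $\mathcal{A}$ given by $H(z)=\ln\frac{z(1+z)}{1+z^2}\big/\ln\frac{1+z^2}{1+z}$ for $z\ne1$ and $H(1)=1$ (principal logarithm). Then for $t>0$, \[ \lim_{\varepsilon\to0^+}\Re[(-t+\varepsilon i)H(-t+\varepsilon i)] = \begin{cases} \dfrac{t\ln\frac{1+t^2}{t(1-t)}}{\ln\frac{1+t^2}{1-t}},&0<t<1,\\ t, & t=1,\\ \dfrac{t\bigl[\ln\frac{1+t^2}{t-1}\ln\frac{1+t^2}{t(t-1)}+2\pi^2\bigr]} {\bigl(\ln\frac{1+t^2}{t-1}\bigr)^2+\pi^2}, &1<t<1+\sqrt2,\\ \dfrac{t\ln\frac{1+t^2}{t-1}\ln\frac{1+t^2}{t(t-1)}}{\bigl(\ln\frac{1+t^2}{t-1}\bigr)^2+\pi^2}, &1+\sqrt2\le t<\infty, \end{cases} \] and \[ \lim_{\varepsilon\to0^+}\Im[(-t+\varepsilon i)H(-t+\varepsilon i)] = \begin{cases} -\dfrac{\pi t}{\ln\frac{1+t^2}{1-t}},&0<t<1,\\ 0, & t=1,\\ -\dfrac{\pi t\ln\frac{t(1+t^2)}{t-1}} {\bigl(\ln\frac{1+t^2}{t-1}\bigr)^2+\pi^2}, &1<t<1+\sqrt2,\\ -\dfrac{\pi t\ln\frac{1+t^2}{t(t-1)}}{\bigl(\ln\frac{1+t^2}{t-1}\bigr)^2+\pi^2}, &1+\sqrt2\le t<\infty. \end{cases}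 \]
   Context: $H$ is the holomorphic extension to $\mathcal{A}$ of $H(x)=\frac{\ln x}{\ln(x^2+1)-\ln(x+1)}-1$, $x\in(0,\infty)$; the principal logarithm is $\ln z=\ln|z|+i\arg z$ with $-\pi<\arg z<\pi$. *)

theory Defs
  imports "HOL-Analysis.Analysis"
begin

text \<open>The branch of H used in the paper: numerator ln(z(1+z)/(1+z^2)) is read as
  Ln z - Ln((1+z^2)/(1+z)), i.e. H(z) = Ln z / Ln((1+z^2)/(1+z)) - 1, principal logarithms,
  with H(1) = 1.\<close>
definition H :: "complex \<Rightarrow> complex" where
  "H z = (if z = 1 then 1
          else (Ln z - Ln ((1 + z^2) / (1 + z))) / Ln ((1 + z^2) / (1 + z)))"

end

theory Submission
  imports Defs
begin

lemma Ln_upper: "Im z > 0 \<Longrightarrow> Ln z = Ln (-z) + \<i> * pi"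
proof -
  assume a: "Im z > 0"
  then have "z \<noteq> 0" by auto
  from Ln_minus[OF this] a show ?thesis by auto
qed

lemma Ln_lower: "Im z < 0 \<Longrightarrow> Ln z = Ln (-z) - \<i> * pi"
proof -
  assume a: "Im z < 0"
  then have "z \<noteq> 0" by auto
  from Ln_minus[OF this] a show ?thesis by auto
qed


lemma re3: "Re (- of_real t * ((of_real a + \<i>*pi - (of_real L - \<i>*pi)) / (of_real L - \<i>*pi))) = t*(L*(L-a) + 2*pi^2)/(L^2+pi^2)"
  by (simp add: Re_divide power2_eq_square algebra_simps add_divide_distrib diff_divide_distrib)
lemma im3: "Im (- of_real t * ((of_real a + \<i>*pi - (of_real L - \<i>*pi)) / (of_real L - \<i>*pi))) = - (pi*t*(a + L)/(L^2+pi^2))"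
  by (simp add: Im_divide power2_eq_square algebra_simps add_divide_distrib diff_divide_distrib)
lemma re4: "Re (- of_real t * ((of_real a + \<i>*pi - (of_real L + \<i>*pi)) / (of_real L + \<i>*pi))) = t*L*(L-a)/(L^2+pi^2)"
  by (simp add: Re_divide power2_eq_square algebra_simps add_divide_distrib diff_divide_distrib)
lemma im4: "Im (- of_real t * ((of_real a + \<i>*pi - (of_real L + \<i>*pi)) / (of_real L + \<i>*pi))) = - (pi*t*(L - a)/(L^2+pi^2))"
  by (simp add: Im_divide power2_eq_square algebra_simps add_divide_distrib diff_divide_distrib)

theorem lemma4p5:
  fixes t :: real
  assumes "t > 0"
  shows "((\<lambda>e::real. Re ((complex_of_real (-t) + complex_of_real e * \<i>)
              * H (complex_of_real (-t) + complex_of_real e * \<i>)))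
          \<longlongrightarrow>
           (if t < 1 then t * ln ((1 + t^2) / (t * (1 - t))) / ln ((1 + t^2) / (1 - t))
            else if t = 1 then t
            else if t < 1 + sqrt 2 then
              t * (ln ((1 + t^2) / (t - 1)) * ln ((1 + t^2) / (t * (t - 1))) + 2 * pi^2)
                / ((ln ((1 + t^2) / (t - 1)))^2 + pi^2)
            else
              t * ln ((1 + t^2) / (t - 1)) * ln ((1 + t^2) / (t * (t - 1)))
                / ((ln ((1 + t^2) / (t - 1)))^2 + pi^2))) (at_right 0)
       \<and> ((\<lambda>e::real. Im ((complex_of_real (-t) + complex_of_real e * \<i>)
              * H (complex_of_real (-t) + complex_of_real e * \<i>)))
          \<longlongrightarrow>
           (if t < 1 then - (pi * t / ln ((1 + t^2) / (1 - t)))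
            else if t = 1 then 0
            else if t < 1 + sqrt 2 then
              - (pi * t * ln (t * (1 + t^2) / (t - 1)) / ((ln ((1 + t^2) / (t - 1)))^2 + pi^2))
            else
              - (pi * t * ln ((1 + t^2) / (t * (t - 1))) / ((ln ((1 + t^2) / (t - 1)))^2 + pi^2))))
          (at_right 0)"
proof -
  note t = assms
  have p2: "1 + t^2 > 0" by (simp add: add_pos_nonneg)
  define z where "z = (\<lambda>e::real. complex_of_real (-t) + complex_of_real e * \<i>)"
  define w where "w = (\<lambda>e. (1 + (z e)^2) / (1 + z e))"
  define RE where "RE = (if t < 1 then t * ln ((1 + t^2) / (t * (1 - t))) / ln ((1 + t^2) / (1 - t))
            else if t = 1 then t
            else if t < 1 + sqrt 2 then
              t * (ln ((1 + t^2) / (t - 1)) * ln ((1 + t^2) / (t * (t - 1))) + 2 * pi^2)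
                / ((ln ((1 + t^2) / (t - 1)))^2 + pi^2)
            else
              t * ln ((1 + t^2) / (t - 1)) * ln ((1 + t^2) / (t * (t - 1)))
                / ((ln ((1 + t^2) / (t - 1)))^2 + pi^2))"
  define IM where "IM = (if t < 1 then - (pi * t / ln ((1 + t^2) / (1 - t)))
            else if t = 1 then 0
            else if t < 1 + sqrt 2 then
              - (pi * t * ln (t * (1 + t^2) / (t - 1)) / ((ln ((1 + t^2) / (t - 1)))^2 + pi^2))
            else
              - (pi * t * ln ((1 + t^2) / (t * (t - 1))) / ((ln ((1 + t^2) / (t - 1)))^2 + pi^2)))"
  have ev: "\<forall>\<^sub>F e in at_right 0. (0::real) < e" by (rule eventually_at_right_less)
  have zlim: "(z \<longlongrightarrow> - of_real t) (at_right 0)" unfolding z_def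
    by (auto intro!: tendsto_eq_intros)
  have "((\<lambda>e. Ln (- z e) + \<i> * pi) \<longlongrightarrow> Ln (- (- of_real t)) + \<i> * pi) (at_right 0)"
    using zlim t by (intro tendsto_intros) (auto simp: complex_nonpos_Reals_iff)
  then have "((\<lambda>e. Ln (- z e) + \<i> * pi) \<longlongrightarrow> of_real (ln t) + \<i> * pi) (at_right 0)"
    using t by (simp add: Ln_of_real)
  then have Lnz: "((\<lambda>e. Ln (z e)) \<longlongrightarrow> of_real (ln t) + \<i> * pi) (at_right 0)"
    apply (rule Lim_transform_eventually)
    using ev by eventually_elim (simp add: Ln_upper z_def)
  have wIm: "Im (w e) = e * (t^2 - 2*t - 1 + e^2) / ((1-t)^2 + e^2)" for e
    unfolding w_def z_def by (simp add: Im_divide power2_eq_square field_simps)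
  have Hz: "\<forall>\<^sub>F e in at_right 0. z e * H (z e) = z e * ((Ln (z e) - Ln (w e)) / Ln (w e))"
    using ev by eventually_elim (auto simp: H_def z_def w_def complex_eq_iff)
  have main: "\<exists>c. ((\<lambda>e. z e * H (z e)) \<longlongrightarrow> c) (at_right 0) \<and> Re c = RE \<and> Im c = IM"
  proof -
    consider "t < 1" | "t = 1" | "1 < t \<and> t < 1 + sqrt 2" | "1 + sqrt 2 \<le> t" by linarith
    then show ?thesis
    proof cases
      case 1
      define L where "L = ln ((1 + t^2) / (1 - t))"
      have q: "(1 + t^2) / (1 - t) > 1" using 1 t by (simp add: field_simps add_pos_pos)
      then have Lpos: "L > 0" unfolding L_def by simp
      have wlim: "(w \<longlongrightarrow> of_real ((1 + t^2) / (1 - t))) (at_right 0)"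
        unfolding w_def using zlim 1 by (auto intro!: tendsto_eq_intros simp: power2_eq_square)
      have "((\<lambda>e. Ln (w e)) \<longlongrightarrow> Ln (of_real ((1 + t^2) / (1 - t)))) (at_right 0)"
        using wlim q by (intro tendsto_intros) (auto simp: complex_nonpos_Reals_iff)
      moreover have "Ln (of_real ((1 + t^2) / (1 - t))) = of_real L"
        unfolding L_def by (rule Ln_of_real) (use q in linarith)
      ultimately have Lnw: "((\<lambda>e. Ln (w e)) \<longlongrightarrow> of_real L) (at_right 0)"
        by simp
      define c where "c = - of_real t * ((of_real (ln t) + \<i> * pi - of_real L) / of_real L)"
      have "((\<lambda>e. z e * ((Ln (z e) - Ln (w e)) / Ln (w e))) \<longlongrightarrow> c) (at_right 0)"
        unfolding c_def using Lpos by (intro tendsto_intros zlim Lnz Lnw) auto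
      then have lim: "((\<lambda>e. z e * H (z e)) \<longlongrightarrow> c) (at_right 0)"
        using tendsto_cong[OF Hz] by simp
      have l1: "ln ((1 + t^2) / (t * (1 - t))) = L - ln t"
        unfolding L_def using t 1 p2 by (simp add: ln_div ln_mult)
      have "Re c = RE" unfolding c_def RE_def l1 L_def[symmetric] using 1 Lpos
        by (simp add: field_simps)
      moreover have "Im c = IM" unfolding c_def IM_def using 1 Lpos
        by (simp add: L_def[symmetric] field_simps)
      ultimately show ?thesis using lim by blast
    next
      case 2
      have zlim1: "(z \<longlongrightarrow> - 1) (at_right 0)" using zlim 2 by simp
      have Lnz1: "((\<lambda>e. Ln (z e)) \<longlongrightarrow> \<i> * pi) (at_right 0)" using Lnz 2 by simp
      have nlim: "((\<lambda>e. norm (1 + (z e)^2)) \<longlongrightarrow> norm (1 + (-1::complex)^2)) (at_right 0)"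
        by (intro tendsto_intros zlim1)
      then have nlim2: "((\<lambda>e. norm (1 + (z e)^2)) \<longlongrightarrow> 2) (at_right 0)" by simp
      have "LIM e at_right 0. norm (1 + (z e)^2) * inverse e :> at_top"
        by (rule filterlim_tendsto_pos_mult_at_top[OF nlim2 _ filterlim_inverse_at_top_right]) simp
      moreover have "\<forall>\<^sub>F e in at_right 0. norm (1 + (z e)^2) * inverse e = norm (w e)"
        using ev
      proof eventually_elim
        case (elim e)
        have "1 + z e = of_real e * \<i>" unfolding z_def using 2 by simp
        then show ?case unfolding w_def using elim by (simp add: norm_divide norm_mult divide_inverse norm_inverse)
      qed
      ultimately have nw: "LIM e at_right 0. norm (w e) :> at_top"
        using filterlim_cong by fastforce
      have lnw: "LIM e at_right 0. ln (norm (w e)) :> at_top"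
        by (rule filterlim_compose[OF ln_at_top nw])
      have evw: "\<forall>\<^sub>F e in at_right 0. norm (w e) > 1"
        using nw by (simp add: filterlim_at_top_dense)
      have "LIM e at_right 0. norm (Ln (w e)) :> at_top"
      proof (rule filterlim_at_top_mono[OF lnw])
        show "\<forall>\<^sub>F e in at_right 0. ln (norm (w e)) \<le> norm (Ln (w e))"
          using evw
        proof eventually_elim
          case (elim e)
          then have "w e \<noteq> 0" by auto
          then have "Re (Ln (w e)) = ln (norm (w e))" by simp
          then show ?case using abs_Re_le_cmod[of "Ln (w e)"] by linarith
        qed
      qed
      then have Lninf: "LIM e at_right 0. Ln (w e) :> at_infinity"
        by (simp add: filterlim_at_infinity_conv_norm_at_top)
      have "((\<lambda>e. z e * Ln (z e) / Ln (w e) - z e) \<longlongrightarrow> 0 - (-1)) (at_right 0)"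
        by (intro tendsto_diff tendsto_divide_0[OF tendsto_mult[OF zlim1 Lnz1] Lninf] zlim1)
      moreover have "\<forall>\<^sub>F e in at_right 0. z e * Ln (z e) / Ln (w e) - z e = z e * H (z e)"
        using Hz evw
      proof eventually_elim
        case (elim e)
        then have "w e \<noteq> 0" by auto
        then have "Re (Ln (w e)) > 0" using elim by simp
        then have "Ln (w e) \<noteq> 0" by auto
        then show ?case using elim by (simp add: field_simps)
      qed
      ultimately have lim: "((\<lambda>e. z e * H (z e)) \<longlongrightarrow> 1) (at_right 0)"
        using tendsto_cong by fastforce
      moreover have "Re 1 = RE" "Im 1 = IM" unfolding RE_def IM_def using 2 by simp_all
      ultimately show ?thesis by blast
    next
      case 3
      then have t1: "1 < t" and t2: "t < 1 + sqrt 2" by auto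
      have sq: "t^2 - 2*t - 1 < 0"
      proof -
        have "t - 1 < sqrt 2" using t2 by simp
        then have "(t-1)^2 < (sqrt 2)^2" using t1 by (intro power_strict_mono) auto
        then show ?thesis by (simp add: power2_eq_square algebra_simps)
      qed
      have "((\<lambda>e::real. t^2 - 2*t - 1 + e^2) \<longlongrightarrow> t^2 - 2*t - 1 + 0^2) (at_right 0)"
        by (intro tendsto_intros)
      then have "\<forall>\<^sub>F e in at_right 0. t^2 - 2*t - 1 + e^2 < 0" using sq
        by (intro order_tendstoD) auto
      then have evIm: "\<forall>\<^sub>F e in at_right 0. Im (w e) < 0" using ev
      proof eventually_elim
        case (elim e)
        have "0 < (1-t)^2 + e^2" using elim by (simp add: add_nonneg_pos)
        then show ?case using elim unfolding wIm by (simp add: mult_pos_neg divide_neg_pos)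
      qed
      define L where "L = ln ((1 + t^2) / (t - 1))"
      have q: "(1 + t^2) / (t - 1) > 0" using t1 p2 by simp
      have wlim: "((\<lambda>e. - w e) \<longlongrightarrow> of_real ((1 + t^2) / (t - 1))) (at_right 0)"
        unfolding w_def using zlim t1 by (auto intro!: tendsto_eq_intros simp: power2_eq_square field_simps)
      have "((\<lambda>e. Ln (- w e) - \<i> * pi) \<longlongrightarrow> Ln (of_real ((1 + t^2) / (t - 1))) - \<i> * pi) (at_right 0)"
        using wlim q by (intro tendsto_intros) (auto simp: complex_nonpos_Reals_iff)
      moreover have "Ln (of_real ((1 + t^2) / (t - 1))) = of_real L"
        unfolding L_def by (rule Ln_of_real) (use q in linarith)
      ultimately have "((\<lambda>e. Ln (- w e) - \<i> * pi) \<longlongrightarrow> of_real L - \<i> * pi) (at_right 0)"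
        by simp
      then have Lnw: "((\<lambda>e. Ln (w e)) \<longlongrightarrow> of_real L - \<i> * pi) (at_right 0)"
        apply (rule Lim_transform_eventually)
        using evIm by eventually_elim (simp add: Ln_lower)
      have nz: "of_real L - \<i> * pi \<noteq> 0" by (simp add: complex_eq_iff)
      define c where "c = - of_real t * ((of_real (ln t) + \<i> * pi - (of_real L - \<i> * pi)) / (of_real L - \<i> * pi))"
      have "((\<lambda>e. z e * ((Ln (z e) - Ln (w e)) / Ln (w e))) \<longlongrightarrow> c) (at_right 0)"
        unfolding c_def using nz by (intro tendsto_intros zlim Lnz Lnw) auto
      then have lim: "((\<lambda>e. z e * H (z e)) \<longlongrightarrow> c) (at_right 0)"
        using tendsto_cong[OF Hz] by simp
      have l1: "ln ((1 + t^2) / (t * (t - 1))) = L - ln t"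
        unfolding L_def using t t1 p2 by (simp add: ln_div ln_mult)
      have l2: "ln (t * (1 + t^2) / (t - 1)) = ln t + L"
        unfolding L_def using t t1 p2 by (simp add: ln_div ln_mult)
      have D: "L^2 + pi^2 > 0" by (simp add: add_nonneg_pos)
      have "Re c = RE" unfolding c_def RE_def l1 L_def[symmetric] re3 im3 using t1 t2 D
        by simp
      moreover have "Im c = IM" unfolding c_def IM_def l1 l2 L_def[symmetric] re3 im3 using t1 t2 D
        by simp
      ultimately show ?thesis using lim by blast

    next
      case 4
      then have t2: "1 + sqrt 2 \<le> t" by auto
      have t1: "1 < t" using t2 real_sqrt_gt_zero[of 2] by linarith
      have sq: "t^2 - 2*t - 1 \<ge> 0"
      proof -
        have "sqrt 2 \<le> t - 1" using t2 by simp
        then have "(sqrt 2)^2 \<le> (t-1)^2" by (intro power_mono) auto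
        then show ?thesis by (simp add: power2_eq_square algebra_simps)
      qed
      have evIm: "\<forall>\<^sub>F e in at_right 0. Im (w e) > 0" using ev
      proof eventually_elim
        case (elim e)
        have "0 < (1-t)^2 + e^2" using elim by (simp add: add_nonneg_pos)
        moreover have "0 < t^2 - 2*t - 1 + e^2" using sq elim by (simp add: add_nonneg_pos)
        ultimately show ?case using elim unfolding wIm by simp
      qed
      define L where "L = ln ((1 + t^2) / (t - 1))"
      have q: "(1 + t^2) / (t - 1) > 0" using t1 p2 by simp
      have wlim: "((\<lambda>e. - w e) \<longlongrightarrow> of_real ((1 + t^2) / (t - 1))) (at_right 0)"
        unfolding w_def using zlim t1 by (auto intro!: tendsto_eq_intros simp: power2_eq_square field_simps)
      have "((\<lambda>e. Ln (- w e) + \<i> * pi) \<longlongrightarrow> Ln (of_real ((1 + t^2) / (t - 1))) + \<i> * pi) (at_right 0)"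
        using wlim q by (intro tendsto_intros) (auto simp: complex_nonpos_Reals_iff)
      moreover have "Ln (of_real ((1 + t^2) / (t - 1))) = of_real L"
        unfolding L_def by (rule Ln_of_real) (use q in linarith)
      ultimately have "((\<lambda>e. Ln (- w e) + \<i> * pi) \<longlongrightarrow> of_real L + \<i> * pi) (at_right 0)"
        by simp
      then have Lnw: "((\<lambda>e. Ln (w e)) \<longlongrightarrow> of_real L + \<i> * pi) (at_right 0)"
        apply (rule Lim_transform_eventually)
        using evIm by eventually_elim (simp add: Ln_upper)
      have nz: "of_real L + \<i> * pi \<noteq> 0" by (simp add: complex_eq_iff)
      define c where "c = - of_real t * ((of_real (ln t) + \<i> * pi - (of_real L + \<i> * pi)) / (of_real L + \<i> * pi))"
      have "((\<lambda>e. z e * ((Ln (z e) - Ln (w e)) / Ln (w e))) \<longlongrightarrow> c) (at_right 0)"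
        unfolding c_def using nz by (intro tendsto_intros zlim Lnz Lnw) auto
      then have lim: "((\<lambda>e. z e * H (z e)) \<longlongrightarrow> c) (at_right 0)"
        using tendsto_cong[OF Hz] by simp
      have l1: "ln ((1 + t^2) / (t * (t - 1))) = L - ln t"
        unfolding L_def using t t1 p2 by (simp add: ln_div ln_mult)
      have l2: "ln (t * (1 + t^2) / (t - 1)) = ln t + L"
        unfolding L_def using t t1 p2 by (simp add: ln_div ln_mult)
      have D: "L^2 + pi^2 > 0" by (simp add: add_nonneg_pos)
      have "Re c = RE" unfolding c_def RE_def l1 L_def[symmetric] re4 im4 using t1 t2 D
        by simp
      moreover have "Im c = IM" unfolding c_def IM_def l1 l2 L_def[symmetric] re4 im4 using t1 t2 D
        by simp
      ultimately show ?thesis using lim by blast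

    qed
  qed
  then obtain c where c: "((\<lambda>e. z e * H (z e)) \<longlongrightarrow> c) (at_right 0)" "Re c = RE" "Im c = IM"
    by blast
  have A: "((\<lambda>e. Re (z e * H (z e))) \<longlongrightarrow> RE) (at_right 0)"
    using tendsto_Re[OF c(1)] c(2) by simp
  have B: "((\<lambda>e. Im (z e * H (z e))) \<longlongrightarrow> IM) (at_right 0)"
    using tendsto_Im[OF c(1)] c(3) by simp
  show ?thesis using A B unfolding z_def RE_def IM_def by blast
qed
end
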